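(* Let $f:X\to Y$ be a continuous surjection between compact spaces such that $f$ is light, i.e. every fibre $f^{-1}(y)$, $y\in Y$, is zero-dimensional. Let $A$ be the set of all continuous functions $u:X\to [0,1]$ such that $u[f^{-1}(y)]$ is zero-dimensional for every $y\in Y$. If $Y$ has property $C$, then $A$ is a dense $G_\delta$-subset of $C(X,[0,1])$.
   Context: Compact spaces are Hausdorff. $C(X,[0,1])$ denotes the space of all continuous maps $u:X\to[0,1]$ with the sup-metric $d(u,v)=\sup_{x\in X}|u(x)-v(x)|$. A space $Y$ has property $C$ (is a $C$-space) if for every sequence $\{\alpha_n:n\in\omega\}$ of open covers of $Y$ there is a sequence $\{\mu_n:n\in\omega\}$, where each $\mu_n$ is a family of pairwise disjoint open subsets of $Y$ refining $\alpha_n$, such that $\bigcup_{n\in\omega}\mu_n$ covers $Y$. *)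

theory Defs
  imports "HOL-Analysis.Analysis"
begin

definition C_space :: "'b topology \<Rightarrow> bool" where
  "C_space Y \<longleftrightarrow>
     (\<forall>\<alpha> :: nat \<Rightarrow> 'b set set.
        (\<forall>n. (\<forall>U\<in>\<alpha> n. openin Y U) \<and> topspace Y \<subseteq> \<Union>(\<alpha> n)) \<longrightarrow>
        (\<exists>\<mu> :: nat \<Rightarrow> 'b set set.
           (\<forall>n. (\<forall>V\<in>\<mu> n. openin Y V \<and> (\<exists>U\<in>\<alpha> n. V \<subseteq> U)) \<and> pairwise disjnt (\<mu> n)) \<and>
           topspace Y \<subseteq> \<Union>(\<Union>n. \<mu> n)))"

text \<open>The metric space C(X,[0,1]) with the sup-metric (functions extensional on the topspace).\<close>
definition CX01 :: "'a topology \<Rightarrow> ('a \<Rightarrow> real) metric" where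
  "CX01 X = cfunspace X (submetric euclidean_metric {0..1::real})"

end

theory Submission
  imports Defs
begin

lemma real_dim0_iff:
  fixes S :: "real set"
  shows "subtopology euclideanreal S dim_le 0 \<longleftrightarrow> (\<forall>a b. a < b \<longrightarrow> \<not> {a..b} \<subseteq> S)"
proof
  assume dim: "subtopology euclideanreal S dim_le 0"
  show "\<forall>a b. a < b \<longrightarrow> \<not> {a..b} \<subseteq> S"
  proof (intro allI impI notI)
    fix a b :: real assume ab: "a < b" and sub: "{a..b} \<subseteq> S"
    have "subtopology (subtopology euclideanreal S) {a..b} dim_le 0"
      using dim dimension_le_subtopology by blast
    then have d2: "subtopology euclideanreal {a..b} dim_le 0"
      using sub by (simp add: subtopology_subtopology Int_absorb1 inf.absorb2)
    have "openin (top_of_set {a..b}) {a<..<b}"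
      by (metis Int_absorb1 greaterThanLessThan_subseteq_atLeastAtMost_iff open_greaterThanLessThan openin_open_Int order_refl)
    moreover have "(a+b)/2 \<in> {a<..<b}" using ab by auto
    ultimately obtain U V where UV: "openin (top_of_set {a..b}) U" "closedin (top_of_set {a..b}) V"
      "openin (top_of_set {a..b}) V" "(a+b)/2 \<in> U" "U \<subseteq> V" "V \<subseteq> {a<..<b}"
      using d2 unfolding dimension_le_0_neighbourhood_base_of_clopen neighbourhood_base_of
      by metis
    have "V = {} \<or> V = {a..b}"
      using connected_clopen [of "{a..b}"] UV by auto
    moreover have "a \<in> {a..b}" "a \<notin> {a<..<b}" using ab by auto
    ultimately show False using UV by blast
  qed
next
  assume H: "\<forall>a b. a < b \<longrightarrow> \<not> {a..b} \<subseteq> S"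
  show "subtopology euclideanreal S dim_le 0"
    unfolding dimension_le_0_neighbourhood_base_of_clopen neighbourhood_base_of
  proof (intro allI impI, elim conjE)
    fix W x assume W: "openin (top_of_set S) W" and xW: "x \<in> W"
    obtain T where T: "open T" "W = S \<inter> T" using W by (auto simp: openin_open)
    obtain e where e: "e > 0" "ball x e \<subseteq> T" using T xW by (meson IntD2 openE)
    obtain \<alpha> where \<alpha>: "\<alpha> \<in> {x - e/2 .. x - e/4}" "\<alpha> \<notin> S"
      using H[rule_format, of "x - e/2" "x - e/4"] e by force
    obtain \<beta> where \<beta>: "\<beta> \<in> {x + e/4 .. x + e/2}" "\<beta> \<notin> S"
      using H[rule_format, of "x + e/4" "x + e/2"] e by force
    define V where "V = S \<inter> {\<alpha><..<\<beta>}"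
    have "openin (top_of_set S) V" unfolding V_def
      by (simp add: openin_open_Int)
    moreover have "V = S \<inter> {\<alpha>..\<beta>}" unfolding V_def using \<alpha> \<beta> by (auto, metis order.not_eq_order_implies_strict, metis order.not_eq_order_implies_strict)
    then have "closedin (top_of_set S) V"
      by (simp add: closedin_closed_Int)
    moreover have "x \<in> V" unfolding V_def using xW T \<alpha> \<beta> e by auto
    moreover have "V \<subseteq> W"
    proof
      fix z assume "z \<in> V"
      then have "z \<in> S" "dist x z < e" using \<alpha> \<beta> unfolding V_def by (auto simp: dist_real_def)
      then show "z \<in> W" using e T by auto
    qed
    ultimately show "\<exists>U V. openin (top_of_set S) U \<and> (closedin (top_of_set S) V \<and> openin (top_of_set S) V) \<and> x \<in> U \<and> U \<subseteq> V \<and> V \<subseteq> W"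
      by blast
  qed
qed

lemma zero_dim_clopen_sep:
  assumes Z: "compact_space Z" "Z dim_le 0" and S: "closedin Z S1" "closedin Z S2" "disjnt S1 S2"
  obtains C where "closedin Z C" "openin Z C" "S1 \<subseteq> C" "disjnt C S2"
proof -
  have nb: "\<forall>W x. openin Z W \<and> x \<in> W \<longrightarrow> (\<exists>U V. openin Z U \<and> (closedin Z V \<and> openin Z V) \<and> x \<in> U \<and> U \<subseteq> V \<and> V \<subseteq> W)"
    using Z(2) unfolding dimension_le_0_neighbourhood_base_of_clopen neighbourhood_base_of by blast
  have W: "openin Z (topspace Z - S2)" using S by blast
  have "\<exists>U V. openin Z U \<and> (closedin Z V \<and> openin Z V) \<and> x \<in> U \<and> U \<subseteq> V \<and> V \<subseteq> topspace Z - S2" if "x \<in> S1" for x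
  proof -
    have "x \<in> topspace Z - S2" using that S closedin_subset unfolding disjnt_def by blast
    then show ?thesis using nb W by blast
  qed
  then obtain U V where UV: "\<And>x. x \<in> S1 \<Longrightarrow> openin Z (U x) \<and> (closedin Z (V x) \<and> openin Z (V x)) \<and> x \<in> U x \<and> U x \<subseteq> V x \<and> V x \<subseteq> topspace Z - S2"
    by metis
  have "compactin Z S1" using S Z closedin_compact_space by blast
  then obtain F where F: "finite F" "F \<subseteq> U ` S1" "S1 \<subseteq> \<Union>F"
  proof -
    have "(\<forall>Ua\<in>U ` S1. openin Z Ua) \<and> S1 \<subseteq> \<Union>(U ` S1)" using UV by blast
    then show ?thesis using \<open>compactin Z S1\<close> that unfolding compactin_def by meson
  qed
  then obtain G where G: "G \<subseteq> S1" "finite G" "F = U ` G"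
    by (meson finite_subset_image)
  define C where "C = \<Union>(V ` G)"
  have "closedin Z C" unfolding C_def using G UV by (intro closedin_Union) auto
  moreover have "openin Z C" unfolding C_def using G UV by (intro openin_Union) auto
  moreover have "S1 \<subseteq> C" unfolding C_def using F G UV by blast
  moreover have "disjnt C S2" unfolding C_def using G UV by (force simp: disjnt_iff)
  ultimately show ?thesis using that by blast
qed

lemma closed_map_nbhd:
  assumes X: "compact_space X" and Y: "Hausdorff_space Y" and f: "continuous_map X Y f"
    and W: "openin X W" and y: "y \<in> topspace Y" and sub: "{x\<in>topspace X. f x = y} \<subseteq> W"
  obtains Ob where "openin Y Ob" "y \<in> Ob" "{x\<in>topspace X. f x \<in> Ob} \<subseteq> W"
proof -
  have "closedin X (topspace X - W)" using W by blast
  then have "compactin X (topspace X - W)" using X closedin_compact_space by blast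
  then have "compactin Y (f ` (topspace X - W))" using f image_compactin by blast
  then have cl: "closedin Y (f ` (topspace X - W))" using Y compactin_imp_closedin by blast
  define Ob where "Ob = topspace Y - f ` (topspace X - W)"
  have "openin Y Ob" unfolding Ob_def using cl by blast
  moreover have "y \<in> Ob" unfolding Ob_def using y sub by auto
  moreover have "{x\<in>topspace X. f x \<in> Ob} \<subseteq> W" unfolding Ob_def by auto
  ultimately show ?thesis using that by blast
qed

lemma compact_space_pointcover:
  assumes "compact_space Y" "\<And>y. y \<in> topspace Y \<Longrightarrow> openin Y (G y) \<and> y \<in> G y"
  obtains Fin where "finite Fin" "Fin \<subseteq> topspace Y" "topspace Y \<subseteq> \<Union>(G ` Fin)"
proof -
  have "(\<forall>U\<in>G ` topspace Y. openin Y U) \<and> topspace Y \<subseteq> \<Union>(G ` topspace Y)"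
    using assms(2) by blast
  then obtain F where "finite F" "F \<subseteq> G ` topspace Y" "topspace Y \<subseteq> \<Union>F"
    using assms(1) unfolding compact_space_alt by meson
  then show ?thesis using that by (metis finite_subset_image)
qed

lemma mem_CX01:
  assumes "compact_space X"
  shows "u \<in> mspace (CX01 X) \<longleftrightarrow> (\<forall>x\<in>topspace X. 0 \<le> u x \<and> u x \<le> 1) \<and> u \<in> extensional (topspace X) \<and> continuous_map X euclideanreal u"
proof -
  have "compactin X (topspace X)" using assms compact_space_def by blast
  then have "u \<in> mspace (CX01 X) \<longleftrightarrow> (\<forall>x\<in>topspace X. u x \<in> {0..1}) \<and> u \<in> extensional (topspace X) \<and> continuous_map X (subtopology euclideanreal {0..1}) u"
    unfolding CX01_def by (simp only: compactin_mspace_cfunspace mtopology_of_submetric mtopology_of_euclidean mspace_submetric mspace_euclidean_metric Int_UNIV_right mem_Collect_eq)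
  then show ?thesis
    by (auto simp: continuous_map_in_subtopology image_subset_iff)
qed

lemma dist_CX01_lt:
  assumes "compact_space X" "u \<in> mspace (CX01 X)" "w \<in> mspace (CX01 X)" "mdist (CX01 X) u w < r" "x \<in> topspace X"
  shows "\<bar>u x - w x\<bar> < r"
proof -
  have "compactin X (topspace X)" using assms compact_space_def by blast
  then show ?thesis using assms cfunspace_mdist_lt[of X u "submetric euclidean_metric {0..1}" w r x]
    unfolding CX01_def by (simp add: dist_real_def)
qed

lemma dist_CX01_le:
  assumes "0 \<le> B" "\<And>x. x \<in> topspace X \<Longrightarrow> \<bar>u x - w x\<bar> \<le> B"
  shows "mdist (CX01 X) u w \<le> B"
  unfolding CX01_def using assms
  by (intro mdist_cfunspace_le) (auto simp: dist_real_def)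

definition Apq :: "'a topology \<Rightarrow> 'b topology \<Rightarrow> ('a \<Rightarrow> 'b) \<Rightarrow> real \<Rightarrow> real \<Rightarrow> ('a \<Rightarrow> real) set" where
  "Apq X Y f p q = {u \<in> mspace (CX01 X). \<forall>y\<in>topspace Y. \<not> {p..q} \<subseteq> u ` {x\<in>topspace X. f x = y}}"

lemma fibre_closed:
  assumes "Hausdorff_space Y" "continuous_map X Y f" "y \<in> topspace Y"
  shows "closedin X {x\<in>topspace X. f x = y}"
proof -
  have "closedin Y {y}" using assms by (simp add: Hausdorff_imp_t1_space closedin_t1_singleton)
  then show ?thesis using closedin_continuous_map_preimage[OF assms(2)] by force
qed

lemma Apq_open:
  assumes X: "compact_space X" and Y: "compact_space Y" "Hausdorff_space Y" and f: "continuous_map X Y f"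
  shows "openin (mtopology_of (CX01 X)) (Apq X Y f p q)"
proof -
  interpret M: Metric_space "mspace (CX01 X)" "mdist (CX01 X)" by simp
  have "\<exists>r>0. M.mball u r \<subseteq> Apq X Y f p q" if u: "u \<in> Apq X Y f p q" for u
  proof -
    have uM: "u \<in> mspace (CX01 X)" using u Apq_def by blast
    then have ucont: "continuous_map X euclideanreal u" using mem_CX01[OF X] by blast
    have "\<exists>t \<delta> Ob. t \<in> {p..q} \<and> \<delta> > 0 \<and> openin Y Ob \<and> y \<in> Ob \<and>
             (\<forall>x\<in>topspace X. f x \<in> Ob \<longrightarrow> \<bar>u x - t\<bar> > \<delta>)" if y: "y \<in> topspace Y" for y
    proof -
      let ?F = "{x\<in>topspace X. f x = y}"
      obtain t where t: "t \<in> {p..q}" "t \<notin> u ` ?F" using u y unfolding Apq_def by blast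
      have "compactin X ?F" using fibre_closed[OF Y(2) f y] X closedin_compact_space by blast
      then have "compact (u ` ?F)" using image_compactin[OF _ ucont] by force
      then have "open (- (u ` ?F))" using compact_imp_closed by blast
      then obtain e where e: "e > 0" "ball t e \<subseteq> - (u ` ?F)" using t by (meson ComplI open_contains_ball_eq)
      have Fe: "\<bar>u x - t\<bar> > e/2" if "x \<in> ?F" for x
      proof -
        have "u x \<notin> ball t e" using e that by blast
        then have "\<bar>t - u x\<bar> \<ge> e" by (simp add: dist_real_def)
        then show ?thesis using e by (simp add: abs_minus_commute)
      qed
      define W where "W = {x \<in> topspace X. u x \<in> {z. \<bar>z - t\<bar> > e/2}}"
      have "open {z::real. \<bar>z - t\<bar> > e/2}"
        by (intro open_Collect_less continuous_intros)
      then have "openin X W" unfolding W_def using openin_continuous_map_preimage[OF ucont] by (simp only: open_openin)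
      moreover have "?F \<subseteq> W" using Fe unfolding W_def by auto
      ultimately obtain Ob where "openin Y Ob" "y \<in> Ob" "{x\<in>topspace X. f x \<in> Ob} \<subseteq> W"
        using closed_map_nbhd[OF X Y(2) f _ y] by metis
      then show ?thesis using t e unfolding W_def
        by (intro exI[of _ t] exI[of _ "e/2"] exI[of _ Ob]) auto
    qed
    then obtain t \<delta> Ob where tdO: "\<And>y. y \<in> topspace Y \<Longrightarrow> t y \<in> {p..q} \<and> \<delta> y > 0 \<and> openin Y (Ob y) \<and> y \<in> Ob y \<and>
             (\<forall>x\<in>topspace X. f x \<in> Ob y \<longrightarrow> \<bar>u x - t y\<bar> > \<delta> y)"
      by metis
    obtain Fin where Fin: "finite Fin" "Fin \<subseteq> topspace Y" "topspace Y \<subseteq> \<Union>(Ob ` Fin)"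
      using compact_space_pointcover[OF Y(1), of Ob] tdO by blast
    define r where "r = (if Fin = {} then 1 else Min (\<delta> ` Fin))"
    have r0: "r > 0" unfolding r_def using Fin tdO by auto
    have rle: "r \<le> \<delta> y" if "y \<in> Fin" for y
      unfolding r_def using Fin that by auto
    have "M.mball u r \<subseteq> Apq X Y f p q"
    proof
      fix w assume w: "w \<in> M.mball u r"
      then have wM: "w \<in> mspace (CX01 X)" and d: "mdist (CX01 X) u w < r" by auto
      have "\<not> {p..q} \<subseteq> w ` {x\<in>topspace X. f x = y'}" if y': "y' \<in> topspace Y" for y'
      proof -
        obtain y where y: "y \<in> Fin" "y' \<in> Ob y" using Fin y' by blast
        have "t y \<notin> w ` {x\<in>topspace X. f x = y'}"
        proof
          assume "t y \<in> w ` {x\<in>topspace X. f x = y'}"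
          then obtain x where x: "x \<in> topspace X" "f x = y'" "w x = t y" by auto
          have "\<bar>u x - t y\<bar> > \<delta> y" using tdO[of y] y x Fin by blast
          moreover have "\<bar>u x - w x\<bar> < r" using dist_CX01_lt[OF X uM wM d x(1)] .
          ultimately show False using rle[OF y(1)] x by linarith
        qed
        then show ?thesis using tdO[of y] y Fin by blast
      qed
      then show "w \<in> Apq X Y f p q" using wM unfolding Apq_def by blast
    qed
    then show ?thesis using r0 by blast
  qed
  moreover have "Apq X Y f p q \<subseteq> mspace (CX01 X)" unfolding Apq_def by blast
  ultimately show ?thesis unfolding mtopology_of_def M.openin_mtopology by blast
qed

lemma tn_sep:
  fixes s m p :: real
  assumes s: "s > 0" and m: "0 < m" "m \<le> s" and nk: "n \<noteq> k"
  shows "\<bar>(p + s / 2^(n+1)) - (p + s / 2^(k+1))\<bar> \<ge> 2 * (m / 2^(n+4) + m / 2^(k+4))"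
proof -
  have main: "(p + s / 2^(a+1)) - (p + s / 2^(b+1)) \<ge> 2 * (m / 2^(a+4) + m / 2^(b+4))" if ab: "a < b" for a b :: nat
  proof -
    have pb: "(2::real)^(b+1) \<ge> 2^(a+2)" using ab by (intro power_increasing) auto
    have pb4: "(2::real)^(b+4) \<ge> 2^(a+4)" using ab by (intro power_increasing) auto
    have "s / 2^(b+1) \<le> s / 2^(a+2)" using pb s by (intro divide_left_mono) auto
    moreover have "m / 2^(b+4) \<le> m / 2^(a+4)" using pb4 m by (intro divide_left_mono) auto
    moreover have "s / 2^(a+1) = 2 * (s / 2^(a+2))" by simp
    moreover have "s / 2^(a+2) = 4 * (s / 2^(a+4))" by (simp add: power_add field_simps)
    moreover have "m / 2^(a+4) \<le> s / 2^(a+4)" using m by (intro divide_right_mono) auto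
    ultimately show ?thesis by (smt (verit))
  qed
  show ?thesis
  proof (cases "n < k")
    case True then show ?thesis using main[OF True] by (smt (verit))
  next
    case False then have "k < n" using nk by simp
    then show ?thesis using main[of k n] by (smt (verit))
  qed
qed

lemma tent_pointwise:
  fixes p s m z :: real and lam :: "nat \<Rightarrow> real" and N :: nat
  assumes s: "s > 0" and m: "0 < m" "m \<le> s" and p: "0 \<le> p" "p + s \<le> 1"
    and z: "0 \<le> z" "z \<le> 1" and lam: "\<And>n. 0 \<le> lam n \<and> lam n \<le> 1"
    and t_def: "t = (\<lambda>n::nat. p + s / 2^(n+1))"
    and r_def: "r = (\<lambda>n::nat. m / 2^(n+4))"
    and val_def: "val = z + (\<Sum>n<N. lam n * max 0 (r n - \<bar>z - t n\<bar>))"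
  shows "0 \<le> val" "val \<le> 1" "\<bar>val - z\<bar> \<le> m / 16"
    and "\<And>n. n < N \<Longrightarrow> val = t n \<Longrightarrow> \<bar>z - t n\<bar> < r n \<and> val = z + lam n * (r n - \<bar>z - t n\<bar>)"
proof -
  have rpos: "r n > 0" for n unfolding r_def using m by simp
  have rle: "r n \<le> m / 16" for n
  proof -
    have "(2::real)^(n+4) \<ge> 2^4" by (intro power_increasing) auto
    then show ?thesis unfolding r_def using m by (intro divide_left_mono) auto
  qed
  have tle: "t n \<le> p + s/2" "t n > p" for n
  proof -
    have "(2::real)^(n+1) \<ge> 2^1" by (intro power_increasing) auto
    then have "s / 2^(n+1) \<le> s / 2^1" using s by (intro divide_left_mono) auto
    then show "t n \<le> p + s/2" unfolding t_def by simp
    show "t n > p" unfolding t_def using s by simp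
  qed
  have sep: "\<bar>t n - t k\<bar> \<ge> 2 * (r n + r k)" if "n \<noteq> k" for n k
    unfolding t_def r_def using tn_sep[OF s m that] by simp
  have goal: "0 \<le> val \<and> val \<le> 1 \<and> \<bar>val - z\<bar> \<le> m / 16 \<and> (\<forall>n<N. val = t n \<longrightarrow> \<bar>z - t n\<bar> < r n \<and> val = z + lam n * (r n - \<bar>z - t n\<bar>))"
  proof (cases "\<exists>k<N. \<bar>z - t k\<bar> < r k")
    case True
    then obtain k where k: "k < N" "\<bar>z - t k\<bar> < r k" by blast
    have other: "max 0 (r n - \<bar>z - t n\<bar>) = 0" if "n \<noteq> k" for n
    proof -
      have "\<bar>z - t n\<bar> \<ge> r n" using sep[OF that] k(2) rpos[of n] rpos[of k] by (smt (verit))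
      then show ?thesis by simp
    qed
    have "(\<Sum>n<N. lam n * max 0 (r n - \<bar>z - t n\<bar>)) = lam k * max 0 (r k - \<bar>z - t k\<bar>) + (\<Sum>n\<in>{..<N}-{k}. lam n * max 0 (r n - \<bar>z - t n\<bar>))"
      using k by (simp add: sum.remove)
    also have "(\<Sum>n\<in>{..<N}-{k}. lam n * max 0 (r n - \<bar>z - t n\<bar>)) = 0"
      using other by (intro sum.neutral) auto
    finally have v: "val = z + lam k * (r k - \<bar>z - t k\<bar>)" unfolding val_def using k by simp
    have l: "0 \<le> lam k" "lam k \<le> 1" using lam by auto
    have A: "0 \<le> lam k * (r k - \<bar>z - t k\<bar>)" using l k by simp
    have B: "lam k * (r k - \<bar>z - t k\<bar>) \<le> r k - \<bar>z - t k\<bar>" using l k by (simp add: mult_left_le_one_le)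
    have "t k + r k \<le> 1" using tle[of k] rle[of k] m p s by linarith
    then have v1: "val \<le> 1" using v A B by linarith
    have v0: "0 \<le> val" using v A z by linarith
    have vd: "\<bar>val - z\<bar> \<le> m/16" using v A B rle[of k] by (smt (verit))
    have "\<bar>z - t n\<bar> < r n \<and> val = z + lam n * (r n - \<bar>z - t n\<bar>)" if "n < N" "val = t n" for n
    proof (cases "n = k")
      case True then show ?thesis using k v by simp
    next
      case False
      have "t k - r k < val" "val \<le> t k + r k" using v A B k by (smt (verit))+
      then have "\<bar>t n - t k\<bar> \<le> r k" using that by (smt (verit))
      then show ?thesis using sep[OF False] rpos[of n] rpos[of k] by (smt (verit))
    qed
    then show ?thesis using v0 v1 vd by blast
  next
    case False
    have "(\<Sum>n<N. lam n * max 0 (r n - \<bar>z - t n\<bar>)) = 0"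
      using False by (intro sum.neutral) auto
    then have v: "val = z" unfolding val_def by simp
    have "\<not> (val = t n)" if "n < N" for n
    proof
      assume "val = t n"
      then have "\<bar>z - t n\<bar> < r n" using v rpos[of n] by simp
      then show False using False that by blast
    qed
    then show ?thesis using v z m by auto
  qed
  then show "val \<le> 1" "\<bar>val - z\<bar> \<le> m / 16" "0 \<le> val"
    "\<And>n. n < N \<Longrightarrow> val = t n \<Longrightarrow> \<bar>z - t n\<bar> < r n \<and> val = z + lam n * (r n - \<bar>z - t n\<bar>)"
    by auto
qed

lemma CX01_mcomplete: "Metric_space.mcomplete (mspace (CX01 X)) (mdist (CX01 X))"
proof -
  interpret S: Submetric UNIV dist "{0..1::real}" by unfold_locales auto
  have "S.sub.mcomplete"
    by (intro S.closedin_mcomplete_imp_mcomplete) (auto simp: complete_UNIV)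
  then have "mcomplete_of (cfunspace X (S.sub.Self))"
    by (rule S.sub.mcomplete_cfunspace)
  moreover have "S.sub.Self = submetric euclidean_metric {0..1}"
    by (simp add: S.sub.Self_def submetric_def euclidean_metric_def)
  ultimately show ?thesis by (simp add: mcomplete_of_def CX01_def)
qed

lemma choice_pair:
  assumes "\<And>x. x \<in> S \<Longrightarrow> \<exists>a b. P x a b"
  obtains A B where "\<And>x. x \<in> S \<Longrightarrow> P x (A x) (B x)"
proof -
  have *: "P x (fst (SOME ab. P x (fst ab) (snd ab))) (snd (SOME ab. P x (fst ab) (snd ab)))" if xS: "x \<in> S" for x
  proof -
    obtain a b where "P x a b" using assms[OF xS] by blast
    then have "P x (fst (a,b)) (snd (a,b))" by simp
    then show ?thesis by (rule someI[where P="\<lambda>ab. P x (fst ab) (snd ab)"])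
  qed
  show ?thesis by (rule that[of "\<lambda>x. fst (SOME ab. P x (fst ab) (snd ab))" "\<lambda>x. snd (SOME ab. P x (fst ab) (snd ab))"]) (rule *)
qed

lemma choice_triple:
  assumes "\<And>x. x \<in> S \<Longrightarrow> \<exists>a b c. P x a b c"
  obtains A B C where "\<And>x. x \<in> S \<Longrightarrow> P x (A x) (B x) (C x)"
proof -
  have "\<And>x. x \<in> S \<Longrightarrow> \<exists>a bc. P x a (fst bc) (snd bc)" using assms by fastforce
  then obtain A BC where **: "\<And>x. x \<in> S \<Longrightarrow> P x (A x) (fst (BC x)) (snd (BC x))"
    by (rule choice_pair[of S "\<lambda>x a bc. P x a (fst bc) (snd bc)"]) blast+
  show ?thesis by (rule that[of A "\<lambda>x. fst (BC x)" "\<lambda>x. snd (BC x)"]) (rule **)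
qed

lemma Apq_dense:
  assumes X: "compact_space X" "Hausdorff_space X" and Y: "compact_space Y" "Hausdorff_space Y"
    and f: "continuous_map X Y f"
    and light: "\<forall>y\<in>topspace Y. subtopology X {x\<in>topspace X. f x = y} dim_le 0"
    and C: "C_space Y" and u: "u \<in> mspace (CX01 X)" and \<epsilon>: "\<epsilon> > 0" and pq: "p < q"
  shows "\<exists>v\<in>Apq X Y f p q. mdist (CX01 X) u v < \<epsilon>"
proof -
  have u01: "\<And>x. x \<in> topspace X \<Longrightarrow> 0 \<le> u x \<and> u x \<le> 1" and uext: "u \<in> extensional (topspace X)"
    and ucont: "continuous_map X euclideanreal u" using u mem_CX01[OF X(1)] by auto
  have duu: "mdist (CX01 X) u u = 0" using u by simp
  show ?thesis
  proof (cases "0 \<le> p \<and> q \<le> 1")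
    case False
    have "u \<in> Apq X Y f p q"
      unfolding Apq_def
    proof (intro CollectI conjI ballI u notI)
      fix y assume "{p..q} \<subseteq> u ` {x\<in>topspace X. f x = y}"
      moreover have "p \<in> {p..q}" "q \<in> {p..q}" using pq by auto
      ultimately have "p \<in> u ` {x\<in>topspace X. f x = y}" "q \<in> u ` {x\<in>topspace X. f x = y}" by auto
      then obtain x1 x2 where "x1 \<in> topspace X" "u x1 = p" "x2 \<in> topspace X" "u x2 = q" by auto
      then show False using False u01[of x1] u01[of x2] by auto
    qed
    then show ?thesis using duu \<epsilon> by (intro bexI[of _ u]) simp_all
  next
    case True
    then have p0: "0 \<le> p" and q1: "q \<le> 1" by auto
    define s where "s = q - p"
    define m where "m = min s \<epsilon>"
    have s0: "s > 0" using pq s_def by simp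
    have m0: "0 < m" "m \<le> s" "m \<le> \<epsilon>" using s0 \<epsilon> m_def by auto
    define t where "t \<equiv> \<lambda>n::nat. p + s / 2^(n+1)"
    define r where "r \<equiv> \<lambda>n::nat. m / 2^(n+4)"
    have rpos: "r n > 0" for n unfolding r_def using m0 by simp
    have tpq: "t n \<in> {p..q}" for n
    proof -
      have "(2::real)^(n+1) \<ge> 2^1" by (intro power_increasing) auto
      then have "s / 2^(n+1) \<le> s / 2^1" using s0 by (intro divide_left_mono) auto
      moreover have "s/2^(n+1) > 0" "s/2^1 \<le> s" using s0 by simp_all
      ultimately have "p \<le> p + s/2^(n+1)" "p + s/2^(n+1) \<le> q" using s_def by linarith+
      then show ?thesis unfolding t_def by simp
    qed
    have nX: "normal_space X" using X compact_Hausdorff_or_regular_imp_normal_space by blast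
    define \<alpha> where "\<alpha> \<equiv> \<lambda>n. {Ob. openin Y Ob \<and> (\<exists>W1 W2. openin X W1 \<and> openin X W2 \<and> disjnt W1 W2 \<and>
        {x\<in>topspace X. f x \<in> Ob} \<subseteq> W1 \<union> W2 \<and> (\<forall>x\<in>W1. u x > t n - r n / 2) \<and> (\<forall>x\<in>W2. u x < t n))}"
    have cover: "topspace Y \<subseteq> \<Union>(\<alpha> n)" for n
    proof
      fix y assume y: "y \<in> topspace Y"
      define F where "F = {x\<in>topspace X. f x = y}"
      have Fcl: "closedin X F" unfolding F_def using fibre_closed[OF Y(2) f y] .
      define Z where "Z = subtopology X F"
      have tZ: "topspace Z = F" unfolding Z_def using Fcl closedin_subset by auto
      have cZ: "compact_space Z" unfolding Z_def
        using Fcl X(1) closedin_compact_space compact_space_subtopology by blast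
      have dZ: "Z dim_le 0" unfolding Z_def F_def using light y by blast
      have ucZ: "continuous_map Z euclideanreal u" unfolding Z_def using ucont continuous_map_from_subtopology by blast
      define S1 where "S1 = {x\<in>topspace Z. u x \<in> {..t n - r n / 2}}"
      define S2 where "S2 = {x\<in>topspace Z. u x \<in> {t n..}}"
      have cS1: "closedin Z S1" unfolding S1_def by (rule closedin_continuous_map_preimage[OF ucZ]) auto
      have cS2: "closedin Z S2" unfolding S2_def by (rule closedin_continuous_map_preimage[OF ucZ]) auto
      have dS: "disjnt S1 S2" unfolding S1_def S2_def disjnt_def using rpos[of n] by auto
      obtain Cc where Cc: "closedin Z Cc" "openin Z Cc" "S1 \<subseteq> Cc" "disjnt Cc S2"
        by (rule zero_dim_clopen_sep[OF cZ dZ cS1 cS2 dS])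
      have Pm: "closedin X Cc" using Cc(1) Fcl unfolding Z_def using closedin_trans_full by blast
      have "closedin Z (topspace Z - Cc)" using Cc(2) by blast
      then have "closedin (subtopology X F) (F - Cc)" using tZ unfolding Z_def by simp
      then have Pp: "closedin X (F - Cc)" using Fcl closedin_trans_full by blast
      have dPP: "disjnt (F - Cc) Cc" by (auto simp: disjnt_def)
      have "\<exists>G1 G2. openin X G1 \<and> openin X G2 \<and> F - Cc \<subseteq> G1 \<and> Cc \<subseteq> G2 \<and> disjnt G1 G2"
        using nX Pm Pp dPP unfolding normal_space_def by blast
      then obtain G1 G2 where G: "openin X G1" "openin X G2" "F - Cc \<subseteq> G1" "Cc \<subseteq> G2" "disjnt G1 G2"
        by blast
      define W1 where "W1 = G1 \<inter> {x\<in>topspace X. u x \<in> {t n - r n / 2<..}}"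
      define W2 where "W2 = G2 \<inter> {x\<in>topspace X. u x \<in> {..<t n}}"
      have oW1: "openin X W1" unfolding W1_def
        using G(1) openin_continuous_map_preimage[OF ucont, of "{t n - r n / 2<..}"] by auto
      have oW2: "openin X W2" unfolding W2_def
        using G(2) openin_continuous_map_preimage[OF ucont, of "{..<t n}"] by auto
      have dW: "disjnt W1 W2" using G(5) unfolding W1_def W2_def disjnt_def by auto
      have FW: "F \<subseteq> W1 \<union> W2"
      proof
        fix x assume xF: "x \<in> F"
        then have xX: "x \<in> topspace X" unfolding F_def by auto
        show "x \<in> W1 \<union> W2"
        proof (cases "x \<in> Cc")
          case True
          then have "x \<notin> S2" using Cc(4) by (auto simp: disjnt_def)
          then have "u x < t n" using xF tZ unfolding S2_def by auto
          then show ?thesis using G(4) True xX unfolding W2_def by auto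
        next
          case False
          then have "x \<notin> S1" using Cc(3) by auto
          then have "u x > t n - r n / 2" using xF tZ unfolding S1_def by auto
          then show ?thesis using G(3) False xF xX unfolding W1_def by auto
        qed
      qed
      obtain Ob where Ob: "openin Y Ob" "y \<in> Ob" "{x\<in>topspace X. f x \<in> Ob} \<subseteq> W1 \<union> W2"
        using closed_map_nbhd[OF X(1) Y(2) f _ y, of "W1 \<union> W2"] oW1 oW2 FW unfolding F_def by blast
      have "\<forall>x\<in>W1. u x > t n - r n / 2" "\<forall>x\<in>W2. u x < t n" unfolding W1_def W2_def by auto
      then have "Ob \<in> \<alpha> n" unfolding \<alpha>_def
        using Ob oW1 oW2 dW by blast
      then show "y \<in> \<Union>(\<alpha> n)" using Ob by blast
    qed
    have aop: "\<forall>U\<in>\<alpha> n. openin Y U" for n unfolding \<alpha>_def by auto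
    have acov: "\<forall>n. (\<forall>U\<in>\<alpha> n. openin Y U) \<and> topspace Y \<subseteq> \<Union>(\<alpha> n)"
      using cover aop by blast
    have "\<exists>\<mu> :: nat \<Rightarrow> 'b set set.
           (\<forall>n. (\<forall>V\<in>\<mu> n. openin Y V \<and> (\<exists>U\<in>\<alpha> n. V \<subseteq> U)) \<and> pairwise disjnt (\<mu> n)) \<and>
           topspace Y \<subseteq> \<Union>(\<Union>n. \<mu> n)"
      by (rule C[unfolded C_space_def, THEN spec, THEN mp, OF acov])
    then obtain \<mu> where \<mu>: "\<And>n. (\<forall>V\<in>\<mu> n. openin Y V \<and> (\<exists>U\<in>\<alpha> n. V \<subseteq> U)) \<and> pairwise disjnt (\<mu> n)"
        and \<mu>cov: "topspace Y \<subseteq> \<Union>(\<Union>n. \<mu> n)"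
      by blast

    have rY: "regular_space Y" using Y compact_Hausdorff_imp_regular_space by blast
    have "\<exists>n V NN. V \<in> \<mu> n \<and> openin Y NN \<and> y \<in> NN \<and> Y closure_of NN \<subseteq> V" if y: "y \<in> topspace Y" for y
    proof -
      obtain n V where nV: "V \<in> \<mu> n" "y \<in> V" using \<mu>cov y by blast
      have "openin Y V" using \<mu> nV by blast
      then have "closedin Y (topspace Y - V)" by blast
      moreover have "y \<in> topspace Y - (topspace Y - V)" using y nV by blast
      moreover have "\<forall>C a. closedin Y C \<and> a \<in> topspace Y - C \<longrightarrow> (\<exists>U. openin Y U \<and> a \<in> U \<and> disjnt C (Y closure_of U))"
        using rY by (simp only: regular_space)
      ultimately obtain NN where NN: "openin Y NN" "y \<in> NN" "disjnt (topspace Y - V) (Y closure_of NN)"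
        by blast
      then have "Y closure_of NN \<subseteq> V" using closure_of_subset_topspace[of Y NN] by (auto simp: disjnt_def)
      then show ?thesis using NN nV by blast
    qed
    then obtain nn VV NN where nVN: "\<And>y. y \<in> topspace Y \<Longrightarrow> VV y \<in> \<mu> (nn y) \<and> openin Y (NN y) \<and> y \<in> NN y \<and> Y closure_of (NN y) \<subseteq> VV y"
      by (rule choice_triple[of "topspace Y" "\<lambda>y n V N. V \<in> \<mu> n \<and> openin Y N \<and> y \<in> N \<and> Y closure_of N \<subseteq> V"]) blast+
    obtain Fin where Fin: "finite Fin" "Fin \<subseteq> topspace Y" "topspace Y \<subseteq> \<Union>(NN ` Fin)"
      using compact_space_pointcover[OF Y(1), of NN] nVN by blast
    define N where "N = Suc (Max (nn ` Fin))"
    have nnN: "nn y < N" if "y \<in> Fin" for y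
    proof -
      have "nn y \<le> Max (nn ` Fin)" using Fin(1) that by (intro Max_ge) auto
      then show ?thesis unfolding N_def by simp
    qed
    have "\<exists>W1 W2. openin X W1 \<and> openin X W2 \<and> disjnt W1 W2 \<and> {x\<in>topspace X. f x \<in> V} \<subseteq> W1 \<union> W2 \<and>
            (\<forall>x\<in>W1. u x > t n - r n / 2) \<and> (\<forall>x\<in>W2. u x < t n)" if V: "V \<in> \<mu> n" for n V
    proof -
      obtain U where U: "U \<in> \<alpha> n" "V \<subseteq> U" using \<mu> V by blast
      then have "\<exists>W1 W2. openin X W1 \<and> openin X W2 \<and> disjnt W1 W2 \<and> {x\<in>topspace X. f x \<in> U} \<subseteq> W1 \<union> W2 \<and>
            (\<forall>x\<in>W1. u x > t n - r n / 2) \<and> (\<forall>x\<in>W2. u x < t n)" unfolding \<alpha>_def by simp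
      then obtain W1 W2 where "openin X W1 \<and> openin X W2 \<and> disjnt W1 W2 \<and> {x\<in>topspace X. f x \<in> U} \<subseteq> W1 \<union> W2 \<and>
            (\<forall>x\<in>W1. u x > t n - r n / 2) \<and> (\<forall>x\<in>W2. u x < t n)" by blast
      moreover have "{x\<in>topspace X. f x \<in> V} \<subseteq> {x\<in>topspace X. f x \<in> U}" using U by blast
      ultimately show ?thesis by blast
    qed
    then have "\<And>nV. nV \<in> Sigma UNIV \<mu> \<Longrightarrow> \<exists>W1 W2. openin X W1 \<and> openin X W2 \<and> disjnt W1 W2 \<and> {x\<in>topspace X. f x \<in> snd nV} \<subseteq> W1 \<union> W2 \<and>
            (\<forall>x\<in>W1. u x > t (fst nV) - r (fst nV) / 2) \<and> (\<forall>x\<in>W2. u x < t (fst nV))" by auto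
    then obtain Wp0 Wm0 where W0: "\<And>nV. nV \<in> Sigma UNIV \<mu> \<Longrightarrow> openin X (Wp0 nV) \<and> openin X (Wm0 nV) \<and> disjnt (Wp0 nV) (Wm0 nV) \<and> {x\<in>topspace X. f x \<in> snd nV} \<subseteq> Wp0 nV \<union> Wm0 nV \<and>
            (\<forall>x\<in>Wp0 nV. u x > t (fst nV) - r (fst nV) / 2) \<and> (\<forall>x\<in>Wm0 nV. u x < t (fst nV))"
      by (rule choice_pair[of "Sigma UNIV \<mu>" "\<lambda>nV W1 W2. openin X W1 \<and> openin X W2 \<and> disjnt W1 W2 \<and> {x\<in>topspace X. f x \<in> snd nV} \<subseteq> W1 \<union> W2 \<and>
            (\<forall>x\<in>W1. u x > t (fst nV) - r (fst nV) / 2) \<and> (\<forall>x\<in>W2. u x < t (fst nV))"]) blast+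
    define Wp where "Wp n V = Wp0 (n,V)" for n V
    define Wm where "Wm n V = Wm0 (n,V)" for n V
    have W: "\<And>n V. V \<in> \<mu> n \<Longrightarrow> openin X (Wp n V) \<and> openin X (Wm n V) \<and> disjnt (Wp n V) (Wm n V) \<and>
            {x\<in>topspace X. f x \<in> V} \<subseteq> Wp n V \<union> Wm n V \<and>
            (\<forall>x\<in>Wp n V. u x > t n - r n / 2) \<and> (\<forall>x\<in>Wm n V. u x < t n)"
      unfolding Wp_def Wm_def using W0 by force
    define K where "K y = Y closure_of (NN y)" for y
    have nVF: "VV y \<in> \<mu> (nn y) \<and> openin Y (NN y) \<and> y \<in> NN y \<and> Y closure_of (NN y) \<subseteq> VV y" if "y \<in> Fin" for y
    proof -
      have "y \<in> topspace Y" using Fin(2) that by (rule subsetD)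
      then show ?thesis by (rule nVN)
    qed
    have KV: "K y \<subseteq> VV y" if "y \<in> Fin" for y using nVF[OF that] unfolding K_def by (elim conjE)
    have VVm: "VV y \<in> \<mu> (nn y)" if "y \<in> Fin" for y using nVF[OF that] by (elim conjE)
    have Wo1: "openin X (Wp n V)" if "V \<in> \<mu> n" for n V using W[of V n, OF that] by (elim conjE)
    have Wo2: "openin X (Wm n V)" if "V \<in> \<mu> n" for n V using W[of V n, OF that] by (elim conjE)
    have Wd: "disjnt (Wp n V) (Wm n V)" if "V \<in> \<mu> n" for n V using W[of V n, OF that] by (elim conjE)
    have Wc: "{x\<in>topspace X. f x \<in> V} \<subseteq> Wp n V \<union> Wm n V" if "V \<in> \<mu> n" for n V using W[of V n, OF that] by (elim conjE)
    have Wu1: "\<And>x. x \<in> Wp n V \<Longrightarrow> u x > t n - r n / 2" if "V \<in> \<mu> n" for n V using W[of V n, OF that] by (elim conjE) (erule bspec)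
    have Wu2: "\<And>x. x \<in> Wm n V \<Longrightarrow> u x < t n" if "V \<in> \<mu> n" for n V using W[of V n, OF that] by (elim conjE) (erule bspec)
    have cK: "closedin X {x\<in>topspace X. f x \<in> K y}" for y
      unfolding K_def by (rule closedin_continuous_map_preimage[OF f]) simp
    have piece: "{x\<in>topspace X. f x \<in> K y} \<subseteq> Wp (nn y) (VV y) \<union> Wm (nn y) (VV y)" if y: "y \<in> Fin" for y
    proof -
      have "{x\<in>topspace X. f x \<in> K y} \<subseteq> {x\<in>topspace X. f x \<in> VV y}" using KV[OF y] by auto
      also have "\<dots> \<subseteq> Wp (nn y) (VV y) \<union> Wm (nn y) (VV y)" by (rule Wc[OF VVm[OF y]])
      finally show ?thesis .
    qed
    define Ap where "Ap n = \<Union>((\<lambda>y. {x\<in>topspace X. f x \<in> K y} \<inter> Wp n (VV y)) ` {y\<in>Fin. nn y = n})" for n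
    define Am where "Am n = \<Union>((\<lambda>y. {x\<in>topspace X. f x \<in> K y} \<inter> Wm n (VV y)) ` {y\<in>Fin. nn y = n})" for n
    have cAp: "closedin X (Ap n)" for n
      unfolding Ap_def
    proof (intro closedin_Union ballI)
      show "finite ((\<lambda>y. {x\<in>topspace X. f x \<in> K y} \<inter> Wp n (VV y)) ` {y\<in>Fin. nn y = n})" using Fin by simp
      fix S assume "S \<in> (\<lambda>y. {x\<in>topspace X. f x \<in> K y} \<inter> Wp n (VV y)) ` {y\<in>Fin. nn y = n}"
      then obtain y where y: "y \<in> Fin" "nn y = n" "S = {x\<in>topspace X. f x \<in> K y} \<inter> Wp n (VV y)" by blast
      have V: "VV y \<in> \<mu> n" using VVm[OF y(1)] y(2) by simp
      have pc: "{x\<in>topspace X. f x \<in> K y} \<subseteq> Wp n (VV y) \<union> Wm n (VV y)" using piece[OF y(1)] y(2) by simp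
      have "S = {x\<in>topspace X. f x \<in> K y} - Wm n (VV y)" using pc Wd[OF V] y(3) by (auto simp: disjnt_def)
      then show "closedin X S" using cK Wo2[OF V] by (simp add: closedin_diff)
    qed
    have cAm: "closedin X (Am n)" for n
      unfolding Am_def
    proof (intro closedin_Union ballI)
      show "finite ((\<lambda>y. {x\<in>topspace X. f x \<in> K y} \<inter> Wm n (VV y)) ` {y\<in>Fin. nn y = n})" using Fin by simp
      fix S assume "S \<in> (\<lambda>y. {x\<in>topspace X. f x \<in> K y} \<inter> Wm n (VV y)) ` {y\<in>Fin. nn y = n}"
      then obtain y where y: "y \<in> Fin" "nn y = n" "S = {x\<in>topspace X. f x \<in> K y} \<inter> Wm n (VV y)" by blast
      have V: "VV y \<in> \<mu> n" using VVm[OF y(1)] y(2) by simp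
      have pc: "{x\<in>topspace X. f x \<in> K y} \<subseteq> Wp n (VV y) \<union> Wm n (VV y)" using piece[OF y(1)] y(2) by simp
      have "S = {x\<in>topspace X. f x \<in> K y} - Wp n (VV y)" using pc Wd[OF V] y(3) by (auto simp: disjnt_def)
      then show "closedin X S" using cK Wo1[OF V] by (simp add: closedin_diff)
    qed
    have dA: "disjnt (Am n) (Ap n)" for n
    proof -
      have False if x: "x \<in> Ap n" "x \<in> Am n" for x
      proof -
        obtain y where y: "y \<in> Fin" "nn y = n" "f x \<in> K y" "x \<in> Wp n (VV y)"
          using x(1) unfolding Ap_def by blast
        obtain y' where y': "y' \<in> Fin" "nn y' = n" "f x \<in> K y'" "x \<in> Wm n (VV y')"
          using x(2) unfolding Am_def by blast
        have V1: "VV y \<in> \<mu> n" "VV y' \<in> \<mu> n" using VVm[OF y(1)] VVm[OF y'(1)] y(2) y'(2) by auto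
        have "f x \<in> VV y" "f x \<in> VV y'" using KV[OF y(1)] KV[OF y'(1)] y(3) y'(3) by auto
        moreover have "pairwise disjnt (\<mu> n)" using \<mu>[of n] by (elim conjE)
        ultimately have "VV y = VV y'" using V1 unfolding pairwise_def disjnt_def by blast
        then show False using Wd[OF V1(1)] y(4) y'(4) by (auto simp: disjnt_def)
      qed
      then show ?thesis by (auto simp: disjnt_def)
    qed
    from nX have U: "\<forall>S T. closedin X S \<and> closedin X T \<and> disjnt S T \<longrightarrow> (\<exists>g::'a\<Rightarrow>real. continuous_map X (top_of_set {0..1}) g \<and> g ` S \<subseteq> {0} \<and> g ` T \<subseteq> {1})"
      by (rule normal_space_iff_Urysohn[THEN iffD1])
    have "\<forall>n. \<exists>g::'a\<Rightarrow>real. continuous_map X (top_of_set {0..1}) g \<and> g ` Am n \<subseteq> {0} \<and> g ` Ap n \<subseteq> {1}"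
    proof
      fix n
      show "\<exists>g::'a\<Rightarrow>real. continuous_map X (top_of_set {0..1}) g \<and> g ` Am n \<subseteq> {0} \<and> g ` Ap n \<subseteq> {1}"
        using U[rule_format, OF conjI[OF cAm[of n] conjI[OF cAp[of n] dA[of n]]]] .
    qed
    then have "\<exists>lam::nat\<Rightarrow>'a\<Rightarrow>real. \<forall>n. continuous_map X (top_of_set {0..1}) (lam n) \<and> lam n ` Am n \<subseteq> {0} \<and> lam n ` Ap n \<subseteq> {1}"
      by (rule choice)
    then obtain lam :: "nat \<Rightarrow> 'a \<Rightarrow> real" where lam0: "\<forall>n. continuous_map X (top_of_set {0..1}) (lam n) \<and> lam n ` Am n \<subseteq> {0} \<and> lam n ` Ap n \<subseteq> {1}"
      by (rule exE)
    have lam: "continuous_map X (top_of_set {0..1}) (lam n) \<and> lam n ` Am n \<subseteq> {0} \<and> lam n ` Ap n \<subseteq> {1}" for n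
      by (rule spec[OF lam0])
    have lam01: "0 \<le> lam n x \<and> lam n x \<le> 1" if "x \<in> topspace X" for n x
    proof -
      from lam[of n] have c: "continuous_map X (top_of_set {0..1}) (lam n)" by (elim conjE)
      have "lam n x \<in> topspace (top_of_set {0..1::real})"
        using continuous_map_image_subset_topspace[OF c] that by blast
      then show ?thesis by simp
    qed
    have lamc: "continuous_map X euclideanreal (lam n)" for n
      using lam[of n] unfolding continuous_map_in_subtopology by (elim conjE)
    define v where "v = (\<lambda>x. if x \<in> topspace X then u x + (\<Sum>n<N. lam n x * max 0 (r n - \<bar>u x - t n\<bar>)) else undefined)"
    have ps: "p + s \<le> 1" using q1 s_def by simp
    have pw: "0 \<le> v x \<and> v x \<le> 1 \<and> \<bar>v x - u x\<bar> \<le> m/16 \<and>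
              (\<forall>n<N. v x = t n \<longrightarrow> \<bar>u x - t n\<bar> < r n \<and> v x = u x + lam n x * (r n - \<bar>u x - t n\<bar>))"
      if x: "x \<in> topspace X" for x
    proof -
      have e: "v x = u x + (\<Sum>n<N. lam n x * max 0 (r n - \<bar>u x - t n\<bar>))" using x by (simp add: v_def)
      note T = tent_pointwise[OF s0 m0(1) m0(2) p0 ps conjunct1[OF u01[OF x]] conjunct2[OF u01[OF x]] lam01[OF x]
                 meta_eq_to_obj_eq[OF t_def] meta_eq_to_obj_eq[OF r_def] e]
      show ?thesis using T(1,2,3) T(4) by blast
    qed
    have vM: "v \<in> mspace (CX01 X)" unfolding mem_CX01[OF X(1)]
    proof (intro conjI ballI)
      show "v \<in> extensional (topspace X)" unfolding v_def extensional_def by simp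
      fix x assume xX: "x \<in> topspace X"
      show "0 \<le> v x" using pw[OF xX] by (elim conjE)
      show "v x \<le> 1" using pw[OF xX] by (elim conjE)
    next
      have "continuous_map X euclideanreal (\<lambda>x. u x + (\<Sum>n<N. lam n x * max 0 (r n - \<bar>u x - t n\<bar>)))"
        by (intro continuous_intros ucont lamc) simp_all
      then show "continuous_map X euclideanreal v"
        by (rule continuous_map_eq) (simp add: v_def)
    qed
    have dv: "mdist (CX01 X) u v < \<epsilon>"
    proof -
      have "\<bar>u x - v x\<bar> \<le> m/16" if "x \<in> topspace X" for x
      proof -
        have "\<bar>v x - u x\<bar> \<le> m/16" using pw[OF that] by (elim conjE)
        then show ?thesis by (simp add: abs_minus_commute)
      qed
      then have "mdist (CX01 X) u v \<le> m/16"
        using m0 by (intro dist_CX01_le) simp_all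
      then show ?thesis using m0 by linarith
    qed
    have vA: "v \<in> Apq X Y f p q" unfolding Apq_def
    proof (intro CollectI conjI ballI vM notI)
      fix y' assume y': "y' \<in> topspace Y" and sub: "{p..q} \<subseteq> v ` {x\<in>topspace X. f x = y'}"
      obtain y where y: "y \<in> Fin" "y' \<in> NN y" using Fin(3) y' by blast
      define n where "n = nn y"
      have nN: "n < N" using nnN[OF y(1)] n_def by simp
      have "t n \<in> v ` {x\<in>topspace X. f x = y'}" using sub tpq[of n] by blast
      then obtain x where x: "x \<in> topspace X" "f x = y'" "v x = t n" by auto
      have "NN y \<subseteq> topspace Y" using nVF[OF y(1)] openin_subset by blast
      then have "NN y \<subseteq> Y closure_of NN y" by (rule closure_of_subset)
      then have fK: "f x \<in> K y" unfolding K_def using x(2) y(2) by blast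
      then have xW: "x \<in> Wp n (VV y) \<union> Wm n (VV y)" using piece[OF y(1)] x(1) n_def by blast
      have VVn: "VV y \<in> \<mu> n" using VVm[OF y(1)] n_def by simp
      have pwx: "\<bar>u x - t n\<bar> < r n" "v x = u x + lam n x * (r n - \<bar>u x - t n\<bar>)"
        using pw[OF x(1)] nN x(3) by blast+
      show False
      proof (cases "x \<in> Wp n (VV y)")
        case True
        then have "x \<in> Ap n" unfolding Ap_def using y(1) x(1) fK n_def by blast
        then have "lam n x = 1" using lam[of n] by blast
        moreover have "u x > t n - r n / 2" using Wu1[OF VVn True] .
        ultimately have "v x = u x + (r n - \<bar>u x - t n\<bar>)" "t n - r n / 2 < u x" using pwx by simp_all
        then have h: "u x + (r n - \<bar>u x - t n\<bar>) = t n" "t n - r n / 2 < u x" using x(3) by simp_all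
        show False
        proof (cases "u x \<le> t n")
          case True
          then have "\<bar>u x - t n\<bar> = t n - u x" by simp
          then show False using h by linarith
        next
          case False
          then have "\<bar>u x - t n\<bar> = u x - t n" by simp
          then show False using h rpos[of n] by linarith
        qed
      next
        case False
        then have xm: "x \<in> Wm n (VV y)" using xW by blast
        then have "x \<in> Am n" unfolding Am_def using y(1) x(1) fK n_def by blast
        then have "lam n x = 0" using lam[of n] by blast
        moreover have "u x < t n" using Wu2[OF VVn xm] .
        ultimately show False using pwx x(3) by simp
      qed
    qed
    show ?thesis using vA dv by blast
  qed
qed

theorem theorem1:
  fixes X :: "'a topology" and Y :: "'b topology" and f :: "'a \<Rightarrow> 'b"
  assumes "compact_space X" "Hausdorff_space X"
    and "compact_space Y" "Hausdorff_space Y"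
    and "continuous_map X Y f" "f ` topspace X = topspace Y"
    and "\<forall>y\<in>topspace Y. subtopology X {x\<in>topspace X. f x = y} dim_le 0"
    and "C_space Y"
  defines "A \<equiv> {u \<in> mspace (CX01 X).
                 \<forall>y\<in>topspace Y. subtopology euclideanreal (u ` {x\<in>topspace X. f x = y}) dim_le 0}"
  shows "gdelta_in (mtopology_of (CX01 X)) A \<and>
         mtopology_of (CX01 X) closure_of A = mspace (CX01 X)"
proof -
  interpret M: Metric_space "mspace (CX01 X)" "mdist (CX01 X)" by simp
  define PQ where "PQ = {(p,q). p \<in> \<rat> \<and> q \<in> \<rat> \<and> (p::real) < q}"
  define G where "G = (\<lambda>(p,q). Apq X Y f p q) ` PQ"
  have "PQ \<subseteq> \<rat> \<times> \<rat>" unfolding PQ_def by auto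
  then have "countable PQ" using countable_rat by (meson countable_SIGMA countable_subset)
  then have cG: "countable G" unfolding G_def by simp
  have "(0,1) \<in> PQ" unfolding PQ_def by auto
  then have GA: "Apq X Y f 0 1 \<in> G" unfolding G_def by force
  have GM: "\<Inter>G \<subseteq> mspace (CX01 X)" using GA unfolding Apq_def by blast
  have AG: "A = \<Inter>G"
  proof (intro set_eqI iffI)
    fix u assume uA: "u \<in> A"
    then have uM: "u \<in> mspace (CX01 X)" unfolding A_def by blast
    have H: "\<forall>a b. a < b \<longrightarrow> \<not> {a..b} \<subseteq> u ` {x\<in>topspace X. f x = y}" if "y \<in> topspace Y" for y
      using uA that unfolding A_def real_dim0_iff by blast
    show "u \<in> \<Inter>G"
    proof
      fix T assume "T \<in> G"
      then obtain p q where "(p,q) \<in> PQ" "T = Apq X Y f p q" unfolding G_def by auto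
      then show "u \<in> T" using H uM unfolding PQ_def Apq_def by auto
    qed
  next
    fix u assume uG: "u \<in> \<Inter>G"
    then have uM: "u \<in> mspace (CX01 X)" using GM by blast
    have "\<not> {a..b} \<subseteq> u ` {x\<in>topspace X. f x = y}" if y: "y \<in> topspace Y" and ab: "a < b" for y a b
    proof
      assume sub: "{a..b} \<subseteq> u ` {x\<in>topspace X. f x = y}"
      obtain p where p: "p \<in> \<rat>" "a < p" "p < b" using Rats_dense_in_real ab by blast
      obtain q where q: "q \<in> \<rat>" "p < q" "q < b" using Rats_dense_in_real p(3) by blast
      have "(p,q) \<in> PQ" unfolding PQ_def using p q by auto
      then have "u \<in> Apq X Y f p q" using uG unfolding G_def by blast
      moreover have "{p..q} \<subseteq> u ` {x\<in>topspace X. f x = y}" using sub p q by auto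
      ultimately show False using y unfolding Apq_def by blast
    qed
    then show "u \<in> A" using uM unfolding A_def real_dim0_iff by blast
  qed
  have Gopen: "openin (mtopology_of (CX01 X)) T" if "T \<in> G" for T
    using that Apq_open[OF assms(1,3,4,5)] unfolding G_def by auto
  have Gdense: "M.mtopology closure_of T = mspace (CX01 X)" if TG: "T \<in> G" for T
  proof -
    obtain p q where pq: "(p,q) \<in> PQ" "T = Apq X Y f p q" using TG unfolding G_def by auto
    have TM: "T \<subseteq> mspace (CX01 X)" using pq unfolding Apq_def by blast
    have "u \<in> M.mtopology closure_of T" if u: "u \<in> mspace (CX01 X)" for u
      unfolding M.metric_closure_of
    proof (intro CollectI conjI allI impI u)
      fix r :: real assume "r > 0"
      then obtain v where "v \<in> T" "mdist (CX01 X) u v < r"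
        using Apq_dense[OF assms(1-5) assms(7,8) u \<open>r > 0\<close>, of p q] pq unfolding PQ_def by auto
      then show "\<exists>y\<in>T. y \<in> M.mball u r" using TM u by auto
    qed
    moreover have "M.mtopology closure_of T \<subseteq> mspace (CX01 X)"
      using closure_of_subset_topspace by fastforce
    ultimately show ?thesis by blast
  qed
  have "gdelta_in (mtopology_of (CX01 X)) A"
    unfolding gdelta_in_alt
  proof
    show "A \<subseteq> topspace (mtopology_of (CX01 X))" unfolding A_def by auto
    show "(countable intersection_of openin (mtopology_of (CX01 X))) A"
      unfolding intersection_of_def using cG Gopen AG by blast
  qed
  moreover have "mtopology_of (CX01 X) closure_of A = mspace (CX01 X)"
    unfolding AG mtopology_of_def
    by (rule M.metric_Baire_category[OF CX01_mcomplete cG]) (use Gopen Gdense in \<open>auto simp: mtopology_of_def\<close>)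
  ultimately show ?thesis by blast
qed

end
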